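(* Let $a\in\mathbb{R}$, $w\in\mathbb{C}\setminus\mathbb{R}$ with $\varphi := |\operatorname{Arg}(w)|\in(0,\pi/2]$, and $\tau>0$. Then all roots of $z + a - we^{-\tau z} = 0$ have negative real parts if and only if $$a > 0\quad\text{and}\quad |w| < \frac{1}{\tau}R(-\tau a;\varphi).$$
   Context: $\operatorname{Arg}(w)\in(-\pi,\pi]$ is the principal argument. For $\varphi\in(0,\pi/2]$, $C(\theta;\varphi) := \theta\cot(\theta-\varphi)$ is a strictly decreasing bijection from $[0,\varphi)$ onto $(-\infty,0]$ with inverse $C^{-1}(\cdot;\varphi)$, and $R(r;\varphi) := -C^{-1}(r;\varphi)/\sin(C^{-1}(r;\varphi)-\varphi)$ for $r\le0$. *)

theory Defs
  imports "HOL-Analysis.Analysis"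
begin

text \<open>C(theta; phi) = theta * cot(theta - phi), a strictly decreasing bijection
  from [0, phi) onto (-infinity, 0] for phi in (0, pi/2].\<close>
definition Cfun :: "real \<Rightarrow> real \<Rightarrow> real" where
  "Cfun \<theta> \<phi> = \<theta> * cot (\<theta> - \<phi>)"

definition Cinv :: "real \<Rightarrow> real \<Rightarrow> real" where
  "Cinv r \<phi> = (THE \<theta>. 0 \<le> \<theta> \<and> \<theta> < \<phi> \<and> Cfun \<theta> \<phi> = r)"

definition Rfun :: "real \<Rightarrow> real \<Rightarrow> real" where
  "Rfun r \<phi> = - Cinv r \<phi> / sin (Cinv r \<phi> - \<phi>)"

end

theory Submission imports Defs begin

lemma cot_antimono:
  assumes "0 < a" "a \<le> c" "c \<le> pi/2"
  shows "cot c \<le> cot a"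
proof -
  have c1: "cos c \<le> cos a" using assms by (intro cos_monotone_0_pi_le) auto
  have c2: "0 \<le> cos c" using assms by (intro cos_ge_zero) auto
  have s1: "0 < sin a" using assms by (intro sin_gt_zero) auto
  have s2: "sin a \<le> sin c" using assms by (intro sin_monotone_2pi_le) auto
  have "cos c / sin c \<le> cos a / sin c" using c1 s1 s2 by (simp add: divide_right_mono)
  also have "\<dots> \<le> cos a / sin a" using c1 c2 s1 s2 by (intro divide_left_mono) auto
  finally show ?thesis by (simp add: cot_def)
qed

definition K :: "real \<Rightarrow> real \<Rightarrow> real" where "K \<phi> t = t * cot (\<phi> - t)"

lemma cot_pos: "0 < a \<Longrightarrow> a < pi/2 \<Longrightarrow> 0 < cot a"
  unfolding cot_def by (intro divide_pos_pos cos_gt_zero sin_gt_zero) auto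

lemma K_strict:
  assumes "0 \<le> t1" "t1 < t2" "t2 < \<phi>" "\<phi> \<le> pi/2"
  shows "K \<phi> t1 < K \<phi> t2"
proof -
  have "cot (\<phi> - t1) \<le> cot (\<phi> - t2)" using assms by (intro cot_antimono) auto
  moreover have "0 < cot (\<phi> - t2)" using assms by (intro cot_pos) auto
  ultimately have "t1 * cot (\<phi> - t1) \<le> t1 * cot (\<phi> - t2)" using assms by (intro mult_left_mono) auto
  also have "\<dots> < t2 * cot (\<phi> - t2)" using assms \<open>0 < cot (\<phi> - t2)\<close> by (intro mult_strict_right_mono) auto
  finally show ?thesis by (simp add: K_def)
qed

lemma Cfun_K: "Cfun t \<phi> = - K \<phi> t"
proof -
  have "t - \<phi> = - (\<phi> - t)" by simp
  then show ?thesis unfolding Cfun_def K_def by (simp only: cot_minus)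
qed

lemma Cinv_props:
  assumes "0 < b" "0 < \<phi>" "\<phi> \<le> pi/2"
  shows "0 < Cinv (-b) \<phi> \<and> Cinv (-b) \<phi> < \<phi> \<and> K \<phi> (Cinv (-b) \<phi>) = b"
proof -
  define g where "g t = t * cos (\<phi> - t) - b * sin (\<phi> - t)" for t
  have "g 0 \<le> 0" using assms sin_gt_zero[of \<phi>] by (simp add: g_def)
  moreover have "0 \<le> g \<phi>" using assms by (simp add: g_def)
  moreover have "continuous_on {0..\<phi>} g" unfolding g_def by (intro continuous_intros)
  ultimately obtain t where t: "0 \<le> t" "t \<le> \<phi>" "g t = 0" using IVT'[of g 0 0 \<phi>] assms by auto
  have "t \<noteq> 0" using t assms sin_gt_zero[of \<phi>] by (auto simp: g_def)
  moreover have "t \<noteq> \<phi>" using t assms by (auto simp: g_def)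
  ultimately have t2: "0 < t" "t < \<phi>" using t by auto
  have sp: "0 < sin (\<phi> - t)" using t2 assms by (intro sin_gt_zero) auto
  have Kt: "K \<phi> t = b" using t(3) sp by (simp add: K_def g_def cot_def field_simps)
  have ex: "0 \<le> t \<and> t < \<phi> \<and> Cfun t \<phi> = - b" using t2 Kt by (simp add: Cfun_K)
  have uniq: "s = t" if "0 \<le> s \<and> s < \<phi> \<and> Cfun s \<phi> = - b" for s
  proof -
    have Ks: "K \<phi> s = b" using that by (simp add: Cfun_K)
    show ?thesis
    proof (rule ccontr)
      assume "s \<noteq> t"
      then consider "s < t" | "t < s" by linarith
      then show False
      proof cases
        case 1 then show False using K_strict[of s t \<phi>] that t2 assms Ks Kt by linarith
      next
        case 2 then show False using K_strict[of t s \<phi>] that t2 assms Ks Kt by linarith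
      qed
    qed
  qed
  have "Cinv (-b) \<phi> = t" unfolding Cinv_def using ex uniq by (rule the_equality)
  then show ?thesis using t2 Kt by simp
qed
lemma W_exp_polar:
  assumes "W = rcis (cmod W) \<phi>"
  shows "W * exp (-s) = complex_of_real (cmod W * exp (- Re s)) * cis (\<phi> - Im s)"
proof -
  have "W * exp (-s) = rcis (cmod W) \<phi> * (complex_of_real (exp (Re (-s))) * cis (Im (-s)))"
    using assms exp_eq_polar[of "-s"] by simp
  also have "\<dots> = complex_of_real (cmod W * exp (- Re s)) * (cis \<phi> * cis (- Im s))"
    by (simp add: rcis_def mult_ac)
  also have "\<dots> = complex_of_real (cmod W * exp (- Re s)) * cis (\<phi> - Im s)"
    by (simp add: cis_mult)
  finally show ?thesis .
qed

lemma root_polar: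
  assumes "W = rcis (cmod W) \<phi>" "s + of_real b - W * exp (-s) = 0"
  shows "Re s + b = cmod W * exp (- Re s) * cos (\<phi> - Im s)"
    and "Im s = cmod W * exp (- Re s) * sin (\<phi> - Im s)"
proof -
  have e: "s + of_real b = complex_of_real (cmod W * exp (- Re s)) * cis (\<phi> - Im s)"
    using assms W_exp_polar[OF assms(1)] by (simp add: algebra_simps)
  show "Re s + b = cmod W * exp (- Re s) * cos (\<phi> - Im s)"
    using arg_cong[OF e, of Re] by simp
  show "Im s = cmod W * exp (- Re s) * sin (\<phi> - Im s)"
    using arg_cong[OF e, of Im] by simp
qed

lemma polar_root:
  assumes "W = rcis (cmod W) \<phi>"
    and "x + b = cmod W * exp (- x) * cos (\<phi> - y)"
    and "y = cmod W * exp (- x) * sin (\<phi> - y)"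
  shows "Complex x y + of_real b - W * exp (- Complex x y) = 0"
proof -
  have "Complex x y + of_real b = W * exp (- Complex x y)"
    unfolding W_exp_polar[OF assms(1)] using assms(2,3) by (intro complex_eqI) simp_all
  then show ?thesis by simp
qed

lemma construct:
  assumes phi: "0 < \<phi>" "\<phi> \<le> pi/2" and W: "W = rcis (cmod W) \<phi>"
    and t0: "0 \<le> t0" "t0 < \<phi>" "0 \<le> K \<phi> t0 - b"
    and rho0: "t0 * exp (K \<phi> t0 - b) / sin (\<phi> - t0) \<le> cmod W"
  shows "\<exists>s. s + of_real b - W * exp (-s) = 0 \<and> 0 \<le> Re s"
proof -
  define \<rho> where "\<rho> y = y * exp (y * (cos (\<phi> - y) / sin (\<phi> - y)) - b) / sin (\<phi> - y)" for y
  have rhoK: "\<rho> y = y * exp (K \<phi> y - b) / sin (\<phi> - y)" for y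
    by (simp add: \<rho>_def K_def cot_def)
  define M where "M = cmod W + t0 / (\<phi> - t0)"
  have M0: "0 \<le> M" using t0 by (simp add: M_def)
  define y1 where "y1 = \<phi> * M / (M + 1)"
  have d1: "\<phi> - y1 = \<phi> / (M + 1)" using M0 by (simp add: y1_def field_simps)
  have "0 < \<phi> / (M + 1)" using phi M0 by simp
  then have y1lt: "y1 < \<phi>" using d1 by linarith
  have y1ge0: "0 \<le> y1" using phi M0 by (simp add: y1_def)
  have ratio: "y1 / (\<phi> - y1) = M"
  proof -
    have p: "0 < \<phi> + M * \<phi>" using phi M0 by (simp add: add_pos_nonneg)
    have "y1 / (\<phi> - y1) = (M * \<phi> + M * (M * \<phi>)) / (\<phi> + M * \<phi>)"
      using d1 phi M0 by (simp add: y1_def field_simps)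
    also have "\<dots> = M * (\<phi> + M * \<phi>) / (\<phi> + M * \<phi>)" by (simp add: algebra_simps)
    also have "\<dots> = M" using p by simp
    finally show ?thesis .
  qed
  have "t0 \<le> y1"
  proof -
    have "t0 / (\<phi> - t0) \<le> M" by (simp add: M_def)
    then have "t0 \<le> M * (\<phi> - t0)" using t0 by (simp add: field_simps)
    then have "t0 * (M + 1) \<le> \<phi> * M" by (simp add: algebra_simps)
    then show ?thesis using M0 by (simp add: y1_def field_simps)
  qed
  have sinpos: "0 < sin (\<phi> - y)" if "y < \<phi>" "0 \<le> y" for y
    using that phi by (intro sin_gt_zero) auto
  have Kmono: "K \<phi> t0 \<le> K \<phi> y" if "t0 \<le> y" "y < \<phi>" for y
    using K_strict[of t0 y \<phi>] that t0 phi by (cases "t0 = y") auto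
  have "cmod W \<le> \<rho> y1"
  proof -
    have "cmod W \<le> M" using t0 by (simp add: M_def)
    also have "M = y1 / (\<phi> - y1)" using ratio by simp
    also have "\<dots> \<le> y1 / sin (\<phi> - y1)"
      using sinpos[OF y1lt y1ge0] y1lt y1ge0 sin_x_le_x[of "\<phi> - y1"]
      by (intro divide_left_mono) auto
    also have "\<dots> \<le> y1 * exp (K \<phi> y1 - b) / sin (\<phi> - y1)"
    proof -
      have "1 \<le> exp (K \<phi> y1 - b)" using Kmono[OF \<open>t0 \<le> y1\<close> y1lt] t0 by simp
      then have "y1 \<le> y1 * exp (K \<phi> y1 - b)" using y1ge0
        by (metis mult.right_neutral mult_left_mono)
      then show ?thesis using sinpos[OF y1lt y1ge0] by (simp add: divide_right_mono)
    qed
    finally show ?thesis by (simp add: rhoK)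
  qed
  moreover have "\<rho> t0 \<le> cmod W" using rho0 by (simp add: rhoK)
  moreover have "continuous_on {t0..y1} \<rho>"
  proof -
    have nz: "\<forall>y\<in>{t0..y1}. sin (\<phi> - y) \<noteq> 0"
      using sinpos y1lt t0 by (metis atLeastAtMost_iff less_irrefl order_le_less_trans order_trans)
    show ?thesis unfolding \<rho>_def by (intro continuous_intros) (use nz in auto)
  qed
  ultimately obtain y where y: "t0 \<le> y" "y \<le> y1" "\<rho> y = cmod W"
    using IVT'[of \<rho> t0 "cmod W" y1] \<open>t0 \<le> y1\<close> by auto
  have yl: "y < \<phi>" using y y1lt by simp
  have y0: "0 \<le> y" using y t0 by simp
  have sp: "0 < sin (\<phi> - y)" using sinpos[OF yl y0] .
  define x where "x = K \<phi> y - b"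
  have x0: "0 \<le> x" using Kmono[OF y(1) yl] t0 by (simp add: x_def)
  have r: "cmod W * exp (- x) = y / sin (\<phi> - y)"
    using y(3) sp by (simp add: rhoK x_def[symmetric] exp_minus field_simps)
  have e1: "x + b = cmod W * exp (- x) * cos (\<phi> - y)"
    unfolding r by (simp add: x_def K_def cot_def)
  have e2: "y = cmod W * exp (- x) * sin (\<phi> - y)"
    unfolding r using sp by simp
  show ?thesis
    using polar_root[OF W e1 e2] x0 by (intro exI[of _ "Complex x y"]) simp
qed

lemma Rfun_eq: "Rfun r \<phi> = Cinv r \<phi> / sin (\<phi> - Cinv r \<phi>)"
proof -
  have "sin (Cinv r \<phi> - \<phi>) = - sin (\<phi> - Cinv r \<phi>)"
    by (metis minus_diff_eq sin_minus)
  then show ?thesis by (simp add: Rfun_def)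
qed

lemma stable:
  assumes phi: "0 < \<phi>" "\<phi> \<le> pi/2" and W: "W = rcis (cmod W) \<phi>"
    and b: "0 < b" and WR: "cmod W < Rfun (-b) \<phi>"
    and root: "s + of_real b - W * exp (-s) = 0"
  shows "Re s < 0"
proof (rule ccontr)
  assume "\<not> Re s < 0"
  then have x0: "0 \<le> Re s" by simp
  define x y where "x = Re s" and "y = Im s"
  define \<theta> where "\<theta> = Cinv (-b) \<phi>"
  have th: "0 < \<theta>" "\<theta> < \<phi>" "K \<phi> \<theta> = b" using Cinv_props[OF b phi] by (auto simp: \<theta>_def)
  have st: "0 < sin (\<phi> - \<theta>)" using th phi by (intro sin_gt_zero) auto
  define R where "R = \<theta> / sin (\<phi> - \<theta>)"
  have RR: "cmod W < R" using WR by (simp add: Rfun_eq R_def \<theta>_def)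
  have Rpos: "0 < R" using th st by (simp add: R_def)
  have bK: "b = \<theta> * cos (\<phi> - \<theta>) / sin (\<phi> - \<theta>)" using th by (simp add: K_def cot_def)
  have R2: "R^2 = b^2 + \<theta>^2"
  proof -
    have "b^2 + \<theta>^2 = (\<theta>^2 * cos (\<phi> - \<theta>)^2 + \<theta>^2 * sin (\<phi> - \<theta>)^2) / sin (\<phi> - \<theta>)^2"
      using st by (simp add: bK power_divide field_simps)
    also have "\<dots> = \<theta>^2 * (cos (\<phi> - \<theta>)^2 + sin (\<phi> - \<theta>)^2) / sin (\<phi> - \<theta>)^2"
      by (simp only: distrib_left)
    also have "\<dots> = R^2" by (simp add: R_def power_divide)
    finally show ?thesis by simp
  qed
  define r where "r = cmod W * exp (- x)"
  have r0: "0 \<le> r" by (simp add: r_def)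
  have rW: "r \<le> cmod W"
    using x0 mult_left_mono[of "exp (- x)" 1 "cmod W"] by (simp add: r_def x_def)
  have e1: "x + b = r * cos (\<phi> - y)" and e2: "y = r * sin (\<phi> - y)"
    using root_polar[OF W root] by (simp_all add: r_def x_def y_def)
  have rR: "r < R" using rW RR by simp
  show False
  proof (cases "\<theta> \<le> \<bar>y\<bar>")
    case True
    have "r^2 = (x+b)^2 + y^2"
    proof -
      have "(x+b)^2 + y^2 = r^2 * cos (\<phi> - y)^2 + r^2 * sin (\<phi> - y)^2"
        by (subst e1, subst (2) e2) (simp add: power_mult_distrib)
      also have "\<dots> = r^2 * (cos (\<phi> - y)^2 + sin (\<phi> - y)^2)" by (simp only: distrib_left)
      finally show ?thesis by simp
    qed
    also have "\<dots> \<ge> b^2 + \<theta>^2"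
    proof -
      have "b^2 \<le> (x+b)^2" using x0 b by (simp add: x_def power_mono)
      moreover have "\<theta>^2 \<le> y^2" using True th
        by (metis abs_ge_zero abs_of_pos power2_abs power_mono)
      ultimately show ?thesis by simp
    qed
    finally have "R^2 \<le> r^2" using R2 by simp
    moreover have "r^2 < R^2" using rR r0 by (simp add: power_strict_mono)
    ultimately show False by simp
  next
    case False
    then have yb: "\<bar>y\<bar> < \<theta>" by simp
    have sp: "0 < sin (\<phi> - y)" using yb th phi by (intro sin_gt_zero) auto
    have "0 < x + b" using x0 b by (simp add: x_def)
    then have rp: "0 < r" using e1 r0 by (cases "r = 0") auto
    have ypos: "0 < y" using e2 rp sp by (metis mult_pos_pos)
    have "K \<phi> y = x + b"
      using e1 e2 sp by (simp add: K_def cot_def) (metis nonzero_mult_div_cancel_right sp less_irrefl mult.assoc mult.commute)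
    then have "K \<phi> \<theta> \<le> K \<phi> y" using th x0 by (simp add: x_def)
    moreover have "K \<phi> y < K \<phi> \<theta>" using K_strict[of y \<theta> \<phi>] ypos yb th phi by simp
    ultimately show False by simp
  qed
qed

lemma core:
  assumes phi: "0 < \<phi>" "\<phi> \<le> pi/2" and W: "W = rcis (cmod W) \<phi>"
  shows "(\<forall>s. s + of_real b - W * exp (-s) = 0 \<longrightarrow> Re s < 0) \<longleftrightarrow> (b > 0 \<and> cmod W < Rfun (-b) \<phi>)"
proof
  assume "b > 0 \<and> cmod W < Rfun (-b) \<phi>"
  then show "\<forall>s. s + of_real b - W * exp (-s) = 0 \<longrightarrow> Re s < 0"
    using stable[OF phi W] by blast
next
  assume H: "\<forall>s. s + of_real b - W * exp (-s) = 0 \<longrightarrow> Re s < 0"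
  have nroot: False if "\<exists>s. s + of_real b - W * exp (-s) = 0 \<and> 0 \<le> Re s"
    using that H by force
  show "b > 0 \<and> cmod W < Rfun (-b) \<phi>"
  proof (rule ccontr)
    assume C: "\<not> (b > 0 \<and> cmod W < Rfun (-b) \<phi>)"
    show False
    proof (cases "b > 0")
      case False
      have "K \<phi> 0 = 0" by (simp add: K_def)
      then show False using construct[OF phi W, of 0 b] False phi nroot by simp
    next
      case True
      define \<theta> where "\<theta> = Cinv (-b) \<phi>"
      have th: "0 < \<theta>" "\<theta> < \<phi>" "K \<phi> \<theta> = b" using Cinv_props[OF True phi] by (auto simp: \<theta>_def)
      have "\<theta> * exp (K \<phi> \<theta> - b) / sin (\<phi> - \<theta>) \<le> cmod W"
        using C True th by (simp add: Rfun_eq \<theta>_def)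
      then show False using construct[OF phi W, of \<theta> b] th nroot by simp
    qed
  qed
qed

lemma main_aux:
  fixes a \<tau> :: real and W0 :: complex
  assumes phi: "0 < \<phi>" "\<phi> \<le> pi/2" and W0: "W0 = rcis (cmod W0) \<phi>" and tau: "\<tau> > 0"
  shows "(\<forall>z::complex. z + of_real a - W0 * exp (- of_real \<tau> * z) = 0 \<longrightarrow> Re z < 0)
     \<longleftrightarrow> (a > 0 \<and> cmod W0 < Rfun (- \<tau> * a) \<phi> / \<tau>)"
proof -
  define W where "W = of_real \<tau> * W0"
  have cW: "cmod W = \<tau> * cmod W0" using tau by (simp add: W_def norm_mult)
  have W: "W = rcis (cmod W) \<phi>"
    by (subst W_def, subst W0) (simp add: cW rcis_def)
  have eq: "(of_real \<tau> * z) + of_real (\<tau> * a) - W * exp (- (of_real \<tau> * z))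
      = of_real \<tau> * (z + of_real a - W0 * exp (- of_real \<tau> * z))" for z
    by (simp add: W_def algebra_simps)
  have L: "(\<forall>z::complex. z + of_real a - W0 * exp (- of_real \<tau> * z) = 0 \<longrightarrow> Re z < 0)
     \<longleftrightarrow> (\<forall>s. s + of_real (\<tau> * a) - W * exp (-s) = 0 \<longrightarrow> Re s < 0)"
  proof
    assume H: "\<forall>z::complex. z + of_real a - W0 * exp (- of_real \<tau> * z) = 0 \<longrightarrow> Re z < 0"
    show "\<forall>s. s + of_real (\<tau> * a) - W * exp (-s) = 0 \<longrightarrow> Re s < 0"
    proof (intro allI impI)
      fix s assume "s + of_real (\<tau> * a) - W * exp (-s) = 0"
      moreover have "s = of_real \<tau> * (s / of_real \<tau>)" using tau by simp
      ultimately have "of_real \<tau> * (s / of_real \<tau> + of_real a - W0 * exp (- of_real \<tau> * (s / of_real \<tau>))) = 0"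
        by (metis eq)
      then have "s / of_real \<tau> + of_real a - W0 * exp (- of_real \<tau> * (s / of_real \<tau>)) = 0"
        using tau by simp
      then have "Re (s / of_real \<tau>) < 0" using H by blast
      then show "Re s < 0" using tau by (simp add: divide_less_0_iff)
    qed
  next
    assume H: "\<forall>s. s + of_real (\<tau> * a) - W * exp (-s) = 0 \<longrightarrow> Re s < 0"
    show "\<forall>z::complex. z + of_real a - W0 * exp (- of_real \<tau> * z) = 0 \<longrightarrow> Re z < 0"
    proof (intro allI impI)
      fix z assume "z + of_real a - W0 * exp (- of_real \<tau> * z) = 0"
      then have "(of_real \<tau> * z) + of_real (\<tau> * a) - W * exp (- (of_real \<tau> * z)) = 0"
        by (simp only: eq) simp
      then have "Re (of_real \<tau> * z) < 0" using H by blast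
      then show "Re z < 0" using tau by (simp add: mult_less_0_iff)
    qed
  qed
  have R: "(\<tau> * a > 0 \<and> cmod W < Rfun (- (\<tau> * a)) \<phi>) \<longleftrightarrow> (a > 0 \<and> cmod W0 < Rfun (- \<tau> * a) \<phi> / \<tau>)"
    using tau by (simp add: cW zero_less_mult_iff field_simps)
  show ?thesis using L core[OF phi W, of "\<tau> * a"] R by simp
qed

theorem mainTheorem14:
  fixes a \<tau> :: real and w :: complex
  assumes "w \<notin> \<real>"
    and "0 < \<bar>Arg w\<bar>" and "\<bar>Arg w\<bar> \<le> pi / 2"
    and "\<tau> > 0"
  shows "(\<forall>z::complex. z + of_real a - w * exp (- of_real \<tau> * z) = 0 \<longrightarrow> Re z < 0)
     \<longleftrightarrow> (a > 0 \<and> cmod w < Rfun (- \<tau> * a) \<bar>Arg w\<bar> / \<tau>)"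
proof (cases "Arg w > 0")
  case True
  have W: "w = rcis (cmod w) \<bar>Arg w\<bar>" using True by (simp add: rcis_cmod_Arg)
  show ?thesis using main_aux[OF assms(2,3) W assms(4)] .
next
  case False
  then have neg: "\<bar>Arg w\<bar> = - Arg w" by simp
  have W: "cnj w = rcis (cmod (cnj w)) \<bar>Arg w\<bar>" using neg by (simp add: rcis_cnj)
  have c: "(z + of_real a - w * exp (- of_real \<tau> * z) = 0) \<longleftrightarrow>
      (cnj z + of_real a - cnj w * exp (- of_real \<tau> * cnj z) = 0)" for z
  proof -
    have "cnj (z + of_real a - w * exp (- of_real \<tau> * z)) = cnj z + of_real a - cnj w * exp (- of_real \<tau> * cnj z)"
      by (simp add: exp_cnj)
    then show ?thesis by (metis complex_cnj_zero_iff)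
  qed
  have L: "(\<forall>z::complex. z + of_real a - w * exp (- of_real \<tau> * z) = 0 \<longrightarrow> Re z < 0)
     \<longleftrightarrow> (\<forall>z::complex. z + of_real a - cnj w * exp (- of_real \<tau> * z) = 0 \<longrightarrow> Re z < 0)"
  proof
    assume H: "\<forall>z::complex. z + of_real a - w * exp (- of_real \<tau> * z) = 0 \<longrightarrow> Re z < 0"
    show "\<forall>z::complex. z + of_real a - cnj w * exp (- of_real \<tau> * z) = 0 \<longrightarrow> Re z < 0"
    proof (intro allI impI)
      fix z assume "z + of_real a - cnj w * exp (- of_real \<tau> * z) = 0"
      then have "cnj z + of_real a - w * exp (- of_real \<tau> * cnj z) = 0" using c[of "cnj z"] by simp
      then show "Re z < 0" using H by fastforce
    qed
  next
    assume H: "\<forall>z::complex. z + of_real a - cnj w * exp (- of_real \<tau> * z) = 0 \<longrightarrow> Re z < 0"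
    show "\<forall>z::complex. z + of_real a - w * exp (- of_real \<tau> * z) = 0 \<longrightarrow> Re z < 0"
    proof (intro allI impI)
      fix z assume "z + of_real a - w * exp (- of_real \<tau> * z) = 0"
      then have "cnj z + of_real a - cnj w * exp (- of_real \<tau> * cnj z) = 0" using c[of z] by simp
      then show "Re z < 0" using H by fastforce
    qed
  qed
  show ?thesis using L main_aux[OF assms(2,3) W assms(4), of a] by simp
qed

end
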